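(* Let $S\subset\mathbb{R}^d$ be compact, let $P_\epsilon$ be a probability measure on $\mathbb{R}^d$ with $\mathbb{E}_{P_\epsilon}[\epsilon]=0$, and let $$\mathcal{P}_\epsilon:=\{P\in\mathcal{P}: P\text{ is the law of }\hat x+\epsilon\text{ for some }\hat x\in S,\ \epsilon\sim P_\epsilon\}.$$ Let $k:\mathbb{R}^d\times\mathbb{R}^d\to\mathbb{R}$ be a continuous bounded translation-invariant positive-definite kernel with $k(x,x)\le1$, and fix $\lambda>0$. Then for all $n\ge1$, $\tilde\gamma_n(\mathcal P_\epsilon)\le\gamma_n$.
   Context: $\mathcal{P}$ is the set of Borel probability measures on $\mathbb{R}^d$; $\mu_P:=\int k(\cdot,x)\,dP(x)$; $\tilde k(P,P'):=\langle\mu_P,\mu_{P'}\rangle_k=\iint k(x,x')\,dP(x)dP'(x')$. For a subset $\mathcal{R}\subset\mathcal{P}$ of size $n$, $\tilde{\mathbf K}_{\mathcal R}=[\tilde k(P,P')]_{P,P'\in\mathcal R}$ and $\tilde\gamma_n(\mathcal P_\epsilon):=\sup_{\mathcal R\subset\mathcal P_\epsilon,|\mathcal R|=n}\frac12\log|I+\lambda^{-1}\tilde{\mathbf K}_{\mathcal R}|$. For $A\subset S$ of size $n$, $\mathbf K_A=[k(x,x')]_{x,x'\in A}$ and $\gamma_n:=\max_{A\subset S,|A|=n}\frac12\log|I+\lambda^{-1}\mathbf K_A|$ (maximum information gain of $\mathrm{GP}(0,k)$ on $S$), with the same $\lambda$. *)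

theory Defs
  imports "HOL-Probability.Probability"
begin

definition set_det :: "'a set \<Rightarrow> ('a \<Rightarrow> 'a \<Rightarrow> real) \<Rightarrow> real" where
  "set_det R M = (\<Sum>p\<in>{p. p permutes R}. of_int (sign p) * (\<Prod>i\<in>R. M i (p i)))"

definition info_gain :: "('a \<Rightarrow> 'a \<Rightarrow> real) \<Rightarrow> real \<Rightarrow> 'a set \<Rightarrow> real" where
  "info_gain K lam R = 1/2 * ln (set_det R (\<lambda>x y. (if x = y then 1 else 0) + K x y / lam))"

text \<open>Maximum information gain over subsets of size n of a set X (supremum in ereal;
  the empty supremum is -infinity).\<close>
definition max_info_gain :: "('a \<Rightarrow> 'a \<Rightarrow> real) \<Rightarrow> real \<Rightarrow> 'a set \<Rightarrow> nat \<Rightarrow> ereal" where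
  "max_info_gain K lam X n = (SUP A\<in>{A. A \<subseteq> X \<and> finite A \<and> card A = n}. ereal (info_gain K lam A))"

text \<open>Positive-definite (i.e. symmetric positive semidefinite) kernel.\<close>
definition pd_kernel :: "('a \<Rightarrow> 'a \<Rightarrow> real) \<Rightarrow> bool" where
  "pd_kernel k \<longleftrightarrow> (\<forall>x y. k x y = k y x) \<and>
     (\<forall>n (x::nat \<Rightarrow> 'a) (c::nat \<Rightarrow> real). (\<Sum>i<n. \<Sum>j<n. c i * c j * k (x i) (x j)) \<ge> 0)"

definition translation_invariant :: "('a::ab_group_add \<Rightarrow> 'a \<Rightarrow> real) \<Rightarrow> bool" where
  "translation_invariant k \<longleftrightarrow> (\<exists>\<psi>. \<forall>x y. k x y = \<psi> (x - y))"

definition kme :: "('a \<Rightarrow> 'a \<Rightarrow> real) \<Rightarrow> 'a measure \<Rightarrow> 'a measure \<Rightarrow> real" where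
  "kme k P Q = (\<integral>x. (\<integral>y. k x y \<partial>Q) \<partial>P)"

definition noisy_laws :: "('a::euclidean_space) set \<Rightarrow> 'a measure \<Rightarrow> 'a measure set" where
  "noisy_laws S Peps = {P. \<exists>xh\<in>S. P = distr Peps borel (\<lambda>e. xh + e)}"

end

theory Submission
  imports Defs "Jordan_Normal_Form.Determinant"
begin


lemma set_det_reindex:
  assumes h: "bij_betw h X Y" and fin: "finite X"
  shows "set_det Y M = set_det X (\<lambda>i j. M (h i) (h j))"
proof -
  let ?mp = "map_permutation X h"
  have inj: "inj_on h X" using h by (auto simp: bij_betw_def)
  obtain h' where h': "bij_betw h' Y X" "\<And>x. x \<in> X \<Longrightarrow> h' (h x) = x" "\<And>y. y \<in> Y \<Longrightarrow> h (h' y) = y"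
    using h bij_betw_inv_into bij_betw_inv_into_left bij_betw_inv_into_right by metis
  have bij: "bij_betw ?mp {p. p permutes X} {q. q permutes Y}"
  proof (rule bij_betw_byWitness[where f' = "map_permutation Y h'"])
    show "\<forall>a\<in>{p. p permutes X}. map_permutation Y h' (?mp a) = a"
      using map_permutation_compose_inv[OF h _ h'(2)] by auto
    show "\<forall>a\<in>{q. q permutes Y}. ?mp (map_permutation Y h' a) = a"
      using map_permutation_compose_inv[OF h'(1) _ h'(3)] by auto
    show "?mp ` {p. p permutes X} \<subseteq> {q. q permutes Y}"
      using map_permutation_permutes[OF h] by auto
    show "map_permutation Y h' ` {q. q permutes Y} \<subseteq> {p. p permutes X}"
      using map_permutation_permutes[OF h'(1)] by auto
  qed
  have "set_det Y M = (\<Sum>p\<in>{p. p permutes X}. of_int (sign (?mp p)) * (\<Prod>y\<in>Y. M y (?mp p y)))"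
    unfolding set_det_def by (rule sum.reindex_bij_betw[OF bij, symmetric])
  also have "\<dots> = (\<Sum>p\<in>{p. p permutes X}. of_int (sign p) * (\<Prod>x\<in>X. M (h x) (h (p x))))"
  proof (rule sum.cong[OF refl])
    fix p assume p: "p \<in> {p. p permutes X}"
    have "sign (?mp p) = sign p" using sign_map_permutation[OF inj _ fin] p by auto
    moreover have "(\<Prod>y\<in>Y. M y (?mp p y)) = (\<Prod>x\<in>X. M (h x) (?mp p (h x)))"
      by (rule prod.reindex_bij_betw[OF h, symmetric])
    moreover have "\<And>x. x \<in> X \<Longrightarrow> ?mp p (h x) = h (p x)"
      using map_permutation_apply[OF inj] by auto
    ultimately show "of_int (sign (?mp p)) * (\<Prod>y\<in>Y. M y (?mp p y)) = of_int (sign p) * (\<Prod>x\<in>X. M (h x) (h (p x)))"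
      by simp
  qed
  finally show ?thesis unfolding set_det_def .
qed

lemma det_mat_set_det: "det (mat n n f) = set_det {0..<n} (\<lambda>i j. f (i, j))"
proof -
  have "det (mat n n f) = (\<Sum>p | p permutes {0..<n}. of_int (sign p) * (\<Prod>i = 0..<n. mat n n f $$ (i, p i)))"
    by (rule det_def') auto
  also have "\<dots> = set_det {0..<n} (\<lambda>i j. f (i, j))"
    unfolding set_det_def
  proof (rule sum.cong[OF refl])
    fix p assume "p \<in> {p. p permutes {0..<n}}"
    then have "\<And>i. i < n \<Longrightarrow> p i < n" using permutes_in_image by fastforce
    then show "of_int (sign p) * (\<Prod>i = 0..<n. mat n n f $$ (i, p i)) = of_int (sign p) * (\<Prod>i\<in>{0..<n}. f (i, p i))"
      by (auto intro!: prod.cong)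
  qed
  finally show ?thesis .
qed

definition schur :: "nat \<Rightarrow> real mat \<Rightarrow> real mat" where
  "schur n A = mat n n (\<lambda>(i,j). A $$ (i,j) - A $$ (i,n) * A $$ (n,j) / A $$ (n,n))"

lemma det_schur:
  assumes A: "A \<in> carrier_mat (Suc n) (Suc n)" and a: "A $$ (n,n) \<noteq> 0"
  shows "det A = A $$ (n,n) * det (schur n A)"
proof -
  define E where "E = mat (Suc n) (Suc n) (\<lambda>(i,j). if i = j then 1 else if j = n then - A $$ (i,n) / A $$ (n,n) else (0::real))"
  have E: "E \<in> carrier_mat (Suc n) (Suc n)" unfolding E_def by auto
  have "upper_triangular E" unfolding E_def upper_triangular_def by auto
  moreover have "diag_mat E = replicate (Suc n) 1"
    by (rule nth_equalityI) (simp_all add: E_def diag_mat_def del: upt_Suc replicate_Suc)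
  ultimately have dE: "det E = 1" using det_upper_triangular[OF _ E] by simp
  have sumlem: "(\<Sum>k\<in>{0..<Suc n}. (if i = k then 1 else if k = n then c else 0) * g k) = (if i = n then g n else g i + c * g n)"
    if "i < Suc n" for i c and g :: "nat \<Rightarrow> real"
  proof (cases "i = n")
    case True then show ?thesis by (simp add: if_distrib[of "\<lambda>x. x * _"] cong: if_cong)
  next
    case False
    then have "i < n" using that by auto
    have "(\<Sum>k=0..<n. if i = k then g k else (if k = n then c else 0) * g k) = (\<Sum>k=0..<n. if i = k then g k else 0)"
      by (intro sum.cong) auto
    with \<open>i < n\<close> show ?thesis by (simp add: atLeast0_lessThan_Suc if_distrib[of "\<lambda>x. x * _"])
  qed
  define C where "C = E * A"
  have C: "C \<in> carrier_mat (Suc n) (Suc n)" unfolding C_def using E A by auto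
  have Cij: "C $$ (i,j) = (if i = n then A $$ (n,j) else A $$ (i,j) - A $$ (i,n) / A $$ (n,n) * A $$ (n,j))"
    if "i < Suc n" "j < Suc n" for i j
  proof -
    have "C $$ (i,j) = (\<Sum>k\<in>{0..<Suc n}. E $$ (i,k) * A $$ (k,j))"
      unfolding C_def using that E A by (simp add: scalar_prod_def)
    also have "\<dots> = (\<Sum>k\<in>{0..<Suc n}. (if i = k then 1 else if k = n then - A $$ (i,n) / A $$ (n,n) else 0) * A $$ (k,j))"
      using that by (intro sum.cong) (auto simp: E_def)
    also have "\<dots> = (if i = n then A $$ (n,j) else A $$ (i,j) + (- A $$ (i,n) / A $$ (n,n)) * A $$ (n,j))"
      by (rule sumlem[OF that(1)])
    finally show ?thesis by simp
  qed
  have "det C = det E * det A" unfolding C_def by (rule det_mult[OF E A])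
  with dE have dCA: "det C = det A" by simp
  have "det C = (\<Sum>i<Suc n. C $$ (i,n) * cofactor C i n)"
    by (rule laplace_expansion_column[OF C]) auto
  also have "\<dots> = C $$ (n,n) * cofactor C n n"
    using a by (simp add: Cij)
  also have "mat_delete C n n = schur n A"
    by (rule eq_matI) (use C in \<open>auto simp: mat_delete_def schur_def Cij\<close>)
  then have "cofactor C n n = det (schur n A)"
    by (simp add: cofactor_def)
  finally show ?thesis using dCA Cij by simp
qed

definition qf :: "nat \<Rightarrow> real mat \<Rightarrow> (nat \<Rightarrow> real) \<Rightarrow> real" where
  "qf n A c = (\<Sum>i<n. \<Sum>j<n. c i * c j * A $$ (i,j))"

lemma qf_ext:
  assumes sym: "\<And>i j. i < Suc n \<Longrightarrow> j < Suc n \<Longrightarrow> A $$ (i,j) = A $$ (j,i)"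
    and a: "A $$ (n,n) \<noteq> 0"
  shows "qf (Suc n) A (c(n:=t)) = qf n (schur n A) c + A $$ (n,n) * (t + (\<Sum>i<n. c i * A $$ (i,n)) / A $$ (n,n))^2"
proof -
  define a where "a = A $$ (n,n)"
  define s where "s = (\<Sum>i<n. c i * A $$ (i,n))"
  have s2: "(\<Sum>j<n. c j * A $$ (n,j)) = s"
    unfolding s_def using sym by (intro sum.cong) auto
  have 1: "qf (Suc n) A (c(n:=t)) = qf n A c + (\<Sum>i<n. c i * t * A $$ (i,n)) + (\<Sum>j<n. t * c j * A $$ (n,j)) + t * t * a"
    unfolding qf_def a_def by (simp add: sum.distrib)
  also have "\<dots> = qf n A c + 2 * t * s + t^2 * a"
  proof -
    have "(\<Sum>i<n. c i * t * A $$ (i,n)) = t * s" unfolding s_def sum_distrib_left by (intro sum.cong) auto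
    moreover have "(\<Sum>j<n. t * c j * A $$ (n,j)) = t * s" unfolding s2[symmetric] sum_distrib_left by (intro sum.cong) auto
    ultimately show ?thesis by (simp add: power2_eq_square)
  qed
  finally have 1: "qf (Suc n) A (c(n:=t)) = qf n A c + 2 * t * s + t^2 * a" .
  have "qf n (schur n A) c = (\<Sum>i<n. \<Sum>j<n. c i * c j * A $$ (i,j) - (c i * A $$ (i,n)) * (c j * A $$ (n,j)) / a)"
    unfolding qf_def schur_def a_def by (intro sum.cong) (auto simp: algebra_simps)
  also have "\<dots> = qf n A c - s * s / a"
  proof -
    have "s * s = (\<Sum>i<n. c i * A $$ (i,n)) * (\<Sum>j<n. c j * A $$ (n,j))" using s2 s_def by simp
    then show ?thesis by (simp add: qf_def sum_subtractf sum_product sum_divide_distrib)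
  qed
  finally have 2: "qf n (schur n A) c = qf n A c - s * s / a" .
  show ?thesis unfolding 1 2 a_def[symmetric] s_def[symmetric] using a[folded a_def]
    by (simp add: field_simps power2_eq_square)
qed

lemma schur_carrier: "schur n A \<in> carrier_mat n n" unfolding schur_def by auto

lemma det_mono:
  assumes "A \<in> carrier_mat n n" "B \<in> carrier_mat n n"
    and "\<And>i j. i < n \<Longrightarrow> j < n \<Longrightarrow> A $$ (i,j) = A $$ (j,i)"
    and "\<And>i j. i < n \<Longrightarrow> j < n \<Longrightarrow> B $$ (i,j) = B $$ (j,i)"
    and "\<And>c. (\<exists>i<n. c i \<noteq> 0) \<Longrightarrow> 0 < qf n A c"
    and "\<And>c. qf n A c \<le> qf n B c"
  shows "0 < det A \<and> det A \<le> det B"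
  using assms
proof (induction n arbitrary: A B)
  case 0
  then show ?case by simp
next
  case (Suc n)
  define a where "a = A $$ (n,n)"
  define b where "b = B $$ (n,n)"
  have qa: "qf (Suc n) A (\<lambda>i. if i = n then 1 else 0) = a"
    unfolding qf_def a_def by (simp add: if_distrib[of "\<lambda>x. x * _"] cong: if_cong)
  have qb: "qf (Suc n) B (\<lambda>i. if i = n then 1 else 0) = b"
    unfolding qf_def b_def by (simp add: if_distrib[of "\<lambda>x. x * _"] cong: if_cong)
  have a: "0 < a" using Suc.prems(5)[of "\<lambda>i. if i = n then 1 else 0"] qa by auto
  have ab: "a \<le> b" using Suc.prems(6)[of "\<lambda>i. if i = n then 1 else 0"] qa qb by auto
  then have b: "0 < b" using a by auto
  note extA = qf_ext[of n A, OF Suc.prems(3), folded a_def]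
  note extB = qf_ext[of n B, OF Suc.prems(4), folded b_def]
  have IH: "0 < det (schur n A) \<and> det (schur n A) \<le> det (schur n B)"
  proof (rule Suc.IH[OF schur_carrier schur_carrier])
    fix i j assume "i < n" "j < n"
    then show "schur n A $$ (i,j) = schur n A $$ (j,i)" "schur n B $$ (i,j) = schur n B $$ (j,i)"
      using Suc.prems(3,4) by (auto simp: schur_def)
  next
    fix c :: "nat \<Rightarrow> real" assume "\<exists>i<n. c i \<noteq> 0"
    then have "\<exists>i<Suc n. (c(n := - (\<Sum>i<n. c i * A $$ (i,n)) / a)) i \<noteq> 0" by auto
    from Suc.prems(5)[OF this] extA[of c "- (\<Sum>i<n. c i * A $$ (i,n)) / a"] a
    show "0 < qf n (schur n A) c" by (simp add: fun_upd_def)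
  next
    fix c :: "nat \<Rightarrow> real"
    define t where "t = - (\<Sum>i<n. c i * B $$ (i,n)) / b"
    have "qf n (schur n A) c \<le> qf (Suc n) A (c(n:=t))"
      using extA[of c t] a by simp
    also have "\<dots> \<le> qf (Suc n) B (c(n:=t))" by (rule Suc.prems(6))
    also have "\<dots> = qf n (schur n B) c" using extB[of c t] b by (simp add: t_def)
    finally show "qf n (schur n A) c \<le> qf n (schur n B) c" .
  qed
  have dA: "det A = a * det (schur n A)" using det_schur[OF Suc.prems(1)] a a_def by simp
  have dB: "det B = b * det (schur n B)" using det_schur[OF Suc.prems(2)] b b_def by simp
  show ?case unfolding dA dB using IH a ab by (auto intro: mult_mono)
qed



lemma pd_finite:
  assumes pd: "pd_kernel k" and fin: "finite T"
  shows "0 \<le> (\<Sum>t\<in>T. \<Sum>s\<in>T. c t * c s * k (y t) (y s))"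
proof -
  obtain h where h: "bij_betw h {0..<card T} T" using ex_bij_betw_nat_finite[OF fin] by blast
  have "(\<Sum>t\<in>T. \<Sum>s\<in>T. c t * c s * k (y t) (y s)) = (\<Sum>i\<in>{0..<card T}. \<Sum>s\<in>T. c (h i) * c s * k (y (h i)) (y s))"
    by (rule sum.reindex_bij_betw[OF h, symmetric])
  also have "\<dots> = (\<Sum>i\<in>{0..<card T}. \<Sum>j\<in>{0..<card T}. c (h i) * c (h j) * k (y (h i)) (y (h j)))"
    by (intro sum.cong refl sum.reindex_bij_betw[OF h, symmetric])
  finally have eq: "(\<Sum>t\<in>T. \<Sum>s\<in>T. c t * c s * k (y t) (y s)) = (\<Sum>i<card T. \<Sum>j<card T. c (h i) * c (h j) * k (y (h i)) (y (h j)))"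
    by (simp only: atLeast0LessThan)
  have "\<And>(n::nat) x c. 0 \<le> (\<Sum>i<n. \<Sum>j<n. c i * c j * k (x i) (x j))" using pd unfolding pd_kernel_def by blast
  from this[where n="card T" and c="\<lambda>i. c (h i)" and x="\<lambda>i. y (h i)"] show ?thesis unfolding eq .
qed

definition Hk :: "('a::ab_group_add \<Rightarrow> 'a \<Rightarrow> real) \<Rightarrow> nat \<Rightarrow> (nat \<Rightarrow> 'a) \<Rightarrow> (nat \<Rightarrow> real) \<Rightarrow> 'a \<Rightarrow> 'a \<Rightarrow> real" where
  "Hk k n x c u v = (\<Sum>i<n. \<Sum>j<n. c i * c j * k (x i + u) (x j + v))"

lemma Hk_pd:
  fixes r :: nat
  assumes pd: "pd_kernel k"
  shows "0 \<le> (\<Sum>a<r. \<Sum>b<r. d a * d b * Hk k n x c (y a) (y b))"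
proof -
  define F where "F = (\<lambda>a i b j. (d a * c i) * (d b * c j) * k (x i + y a) (x j + y b))"
  have "(\<Sum>a<r. \<Sum>b<r. d a * d b * Hk k n x c (y a) (y b)) = (\<Sum>a<r. \<Sum>b<r. \<Sum>i<n. \<Sum>j<n. F a i b j)"
    unfolding Hk_def F_def by (intro sum.cong refl) (simp add: sum_distrib_left mult_ac)
  also have "\<dots> = (\<Sum>a<r. \<Sum>i<n. \<Sum>b<r. \<Sum>j<n. F a i b j)"
    by (intro sum.cong refl sum.swap)
  also have "\<dots> = (\<Sum>(a,i)\<in>{..<r}\<times>{..<n}. \<Sum>b<r. \<Sum>j<n. F a i b j)"
    by (rule sum.cartesian_product)
  also have "\<dots> = (\<Sum>(a,i)\<in>{..<r}\<times>{..<n}. \<Sum>(b,j)\<in>{..<r}\<times>{..<n}. F a i b j)"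
    by (rule sum.cong[OF refl]) (simp add: case_prod_unfold sum.cartesian_product)
  also have "\<dots> = (\<Sum>p\<in>{..<r}\<times>{..<n}. \<Sum>q\<in>{..<r}\<times>{..<n}.
      (\<lambda>p. d (fst p) * c (snd p)) p * (\<lambda>p. d (fst p) * c (snd p)) q * k ((\<lambda>p. x (snd p) + y (fst p)) p) ((\<lambda>p. x (snd p) + y (fst p)) q))"
    unfolding F_def by (simp add: case_prod_beta)
  finally have eq: "(\<Sum>a<r. \<Sum>b<r. d a * d b * Hk k n x c (y a) (y b)) = (\<Sum>p\<in>{..<r}\<times>{..<n}. \<Sum>q\<in>{..<r}\<times>{..<n}.
      (\<lambda>p. d (fst p) * c (snd p)) p * (\<lambda>p. d (fst p) * c (snd p)) q * k ((\<lambda>p. x (snd p) + y (fst p)) p) ((\<lambda>p. x (snd p) + y (fst p)) q))" .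
  have fin: "finite ({..<r}\<times>{..<n})" by simp
  note inst = pd_finite[OF pd fin, where c="\<lambda>p. d (fst p) * c (snd p)" and y="\<lambda>p. x (snd p) + y (fst p)"]
  show ?thesis unfolding eq using inst by simp
qed

lemma Hk_sym:
  assumes "\<And>u v. k u v = k v u"
  shows "Hk k n x c u v = Hk k n x c v u"
proof -
  have "Hk k n x c v u = (\<Sum>i<n. \<Sum>j<n. c j * c i * k (x j + v) (x i + u))"
    unfolding Hk_def by (rule sum.swap)
  also have "\<dots> = Hk k n x c u v" unfolding Hk_def
  proof (intro sum.cong refl)
    fix i j show "c j * c i * k (x j + v) (x i + u) = c i * c j * k (x i + u) (x j + v)"
      using assms[of "x j + v" "x i + u"] by simp
  qed
  finally show ?thesis by simp
qed

lemma Hk_diag: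
  assumes "translation_invariant k"
  shows "Hk k n x c u u = Hk k n x c 0 0"
proof -
  obtain \<psi> where p: "\<And>x y. k x y = \<psi> (x - y)" using assms unfolding translation_invariant_def by blast
  show ?thesis unfolding Hk_def p by simp
qed

lemma Hk_le:
  assumes pd: "pd_kernel k" and ti: "translation_invariant k"
  shows "Hk k n x c u v \<le> Hk k n x c 0 0"
proof -
  have sym: "\<And>u v. k u v = k v u" using pd unfolding pd_kernel_def by blast
  have "0 \<le> (\<Sum>a<(2::nat). \<Sum>b<(2::nat). (\<lambda>a. if a = 0 then 1 else -1::real) a * (\<lambda>a. if a = 0 then 1 else -1::real) b *
     Hk k n x c ((\<lambda>a. if a = 0 then u else v) a) ((\<lambda>a. if a = 0 then u else v) b))"
    by (rule Hk_pd[OF pd])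
  also have "\<dots> = Hk k n x c u u - Hk k n x c u v - Hk k n x c v u + Hk k n x c v v"
    by (simp add: numeral_2_eq_2)
  also have "\<dots> = 2 * Hk k n x c 0 0 - 2 * Hk k n x c u v"
    using Hk_diag[OF ti, where n=n and x=x and c=c and u=u] Hk_diag[OF ti, where n=n and x=x and c=c and u=v] Hk_sym[OF sym, where n=n and x=x and c=c and u=u and v=v] by simp
  finally show ?thesis by simp
qed

lemma cont_meas_pair:
  fixes f :: "'a::euclidean_space \<times> 'a \<Rightarrow> real"
  assumes "continuous_on UNIV f" "sets M1 = sets borel" "sets M2 = sets borel"
  shows "f \<in> borel_measurable (M1 \<Otimes>\<^sub>M M2)"
proof -
  have "sets (M1 \<Otimes>\<^sub>M M2) = sets (borel \<Otimes>\<^sub>M borel)"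
    by (rule sets_pair_measure_cong) (use assms in auto)
  also have "\<dots> = sets borel" by (metis borel_prod)
  finally have s: "sets (M1 \<Otimes>\<^sub>M M2) = sets (borel :: ('a \<times> 'a) measure)" .
  show ?thesis using borel_measurable_continuous_onI[OF assms(1)] measurable_cong_sets[OF s refl] by blast
qed

lemma cont_meas:
  fixes f :: "'a::euclidean_space \<Rightarrow> 'b::euclidean_space"
  assumes "continuous_on UNIV f" "sets M = sets borel"
  shows "f \<in> borel_measurable M"
  using borel_measurable_continuous_onI[OF assms(1)] measurable_cong_sets[OF assms(2) refl] by blast

lemma cont_k_shift:
  fixes k :: "'a::euclidean_space \<Rightarrow> 'a \<Rightarrow> real"
  assumes "continuous_on UNIV (\<lambda>(x, y). k x y)"
  shows "continuous_on UNIV (\<lambda>p. k (a + fst p) (b + snd p))"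
proof -
  have "continuous_on UNIV (\<lambda>p. (\<lambda>(x, y). k x y) ((\<lambda>p. (a + fst p, b + snd p)) p))"
    by (rule continuous_on_compose2[OF assms]) (auto intro!: continuous_on_Pair continuous_on_add continuous_on_const continuous_on_fst continuous_on_snd continuous_on_id)
  then show ?thesis by simp
qed

fun Vf :: "'a measure \<Rightarrow> ('a \<Rightarrow> 'a \<Rightarrow> real) \<Rightarrow> 'a list \<Rightarrow> nat \<Rightarrow> real" where
  "Vf P H ys 0 = (\<Sum>a<length ys. \<Sum>b<length ys. H (ys!a) (ys!b))"
| "Vf P H ys (Suc s) = (\<integral>e. Vf P H (ys @ [e]) s \<partial>P)"

lemma double_integral_nonneg:
  fixes P :: "'a measure" and H :: "'a \<Rightarrow> 'a \<Rightarrow> real"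
  assumes P: "prob_space P"
    and Hm: "(\<lambda>(u,v). H u v) \<in> borel_measurable (P \<Otimes>\<^sub>M P)"
    and Hm1: "\<And>u. H u \<in> borel_measurable P"
    and Hb: "\<And>u v. \<bar>H u v\<bar> \<le> C"
    and Hs: "\<And>u v. H u v = H v u"
    and Hd: "\<And>u. H u u = q"
    and Hpd: "\<And>r (y::nat \<Rightarrow> 'a). 0 \<le> (\<Sum>a<r. \<Sum>b<r. H (y a) (y b))"
  shows "0 \<le> (\<integral>u. (\<integral>v. H u v \<partial>P) \<partial>P)"
proof -
  interpret prob_space P by (rule P)
  define g where "g u = (\<integral>v. H u v \<partial>P)" for u
  define I where "I = (\<integral>u. g u \<partial>P)"
  have gm: "g \<in> borel_measurable P"
    unfolding g_def using borel_measurable_lebesgue_integral[of "\<lambda>u v. H u v" P] Hm by simp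
  have intH: "integrable P (H u)" for u
    by (rule integrable_const_bound[where B=C]) (use Hb Hm1 in auto)
  have gb: "\<bar>g u\<bar> \<le> C" for u
  proof -
    have "g u \<le> C" unfolding g_def by (rule integral_le_const[OF intH]) (use Hb in \<open>auto simp: abs_le_iff\<close>)
    moreover have "- C \<le> g u" unfolding g_def
    proof (rule integral_ge_const[OF intH])
      show "AE x in P. - C \<le> H u x" by (intro AE_I2) (smt (verit) Hb)
    qed
    ultimately show ?thesis by auto
  qed
  have intg: "integrable P g"
    by (rule integrable_const_bound[where B=C]) (use gb gm in auto)
  have nonneg: "0 \<le> Vf P H ys s" for ys s
  proof (induction s arbitrary: ys)
    case 0
    show ?case using Hpd[where r="length ys" and y="\<lambda>a. ys ! a"] by simp
  next
    case (Suc s)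
    show ?case by (simp add: Suc.IH integral_nonneg_AE)
  qed
  have closed: "Vf P H ys s = (\<Sum>a<length ys. \<Sum>b<length ys. H (ys!a) (ys!b))
      + 2 * real s * (\<Sum>a<length ys. g (ys!a)) + real s * q + real s * (real s - 1) * I" for ys s
  proof (induction s arbitrary: ys)
    case 0
    show ?case by simp
  next
    case (Suc s)
    define r where "r = length ys"
    define S where "S = (\<Sum>a<r. \<Sum>b<r. H (ys!a) (ys!b))"
    define G where "G = (\<Sum>a<r. g (ys!a))"
    have S1: "(\<Sum>a<length (ys@[e]). \<Sum>b<length (ys@[e]). H ((ys@[e])!a) ((ys@[e])!b)) = S + 2 * (\<Sum>a<r. H (ys!a) e) + q" for e
    proof -
      have "(\<Sum>a<length (ys@[e]). \<Sum>b<length (ys@[e]). H ((ys@[e])!a) ((ys@[e])!b))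
          = S + (\<Sum>a<r. H (ys!a) e) + (\<Sum>b<r. H e (ys!b)) + H e e"
        by (simp add: S_def r_def nth_append sum.distrib)
      also have "(\<Sum>b<r. H e (ys!b)) = (\<Sum>a<r. H (ys!a) e)" using Hs by (intro sum.cong) auto
      finally show ?thesis using Hd by simp
    qed
    have G1: "(\<Sum>a<length (ys@[e]). g ((ys@[e])!a)) = G + g e" for e
      by (simp add: G_def r_def nth_append)
    define K where "K = S + q + 2 * real s * G + real s * q + real s * (real s - 1) * I"
    have pt: "Vf P H (ys@[e]) s = K + (2 * (\<Sum>a<r. H (ys!a) e) + 2 * real s * g e)" for e
      unfolding Suc.IH S1 G1 K_def by (simp add: algebra_simps)
    have "Vf P H ys (Suc s) = (\<integral>e. K + (2 * (\<Sum>a<r. H (ys!a) e) + 2 * real s * g e) \<partial>P)"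
      by (simp only: Vf.simps pt)
    also have "\<dots> = K + (2 * (\<Sum>a<r. g (ys!a)) + 2 * real s * I)"
    proof -
      have i1: "integrable P (\<lambda>e. \<Sum>a<r. H (ys!a) e)" using intH by auto
      have "(\<integral>e. (\<Sum>a<r. H (ys!a) e) \<partial>P) = (\<Sum>a<r. g (ys!a))"
        unfolding g_def by (rule Bochner_Integration.integral_sum) (use intH in auto)
      then show ?thesis
        using i1 intg prob_space by (simp add: I_def)
    qed
    finally show ?case unfolding K_def S_def G_def r_def by (simp add: algebra_simps)
  qed
  have q0: "0 \<le> q" using Hpd[where r=1 and y="\<lambda>_. undefined"] Hd by simp
  show "0 \<le> (\<integral>u. (\<integral>v. H u v \<partial>P) \<partial>P)"
  proof (rule ccontr)
    assume "\<not> ?thesis"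
    then have I: "I < 0" unfolding I_def g_def by simp
    obtain m :: nat where m: "q / (- I) + 2 < real m" using reals_Archimedean2 by blast
    have "0 \<le> Vf P H [] m" by (rule nonneg)
    also have "Vf P H [] m = real m * (q + (real m - 1) * I)" by (simp add: closed algebra_simps)
    also have "\<dots> < 0"
    proof (rule mult_pos_neg)
      show "0 < real m" using m q0 I by (smt (verit) divide_nonneg_pos)
      have "q / (- I) < real m - 1" using m by simp
      then have "q < (real m - 1) * (- I)" using I pos_divide_less_eq[of "- I" q "real m - 1"] by simp
      then show "q + (real m - 1) * I < 0" by (simp add: algebra_simps)
    qed
    finally show False by simp
  qed
qed

lemma k_meas1:
  fixes k :: "'a::euclidean_space \<Rightarrow> 'a \<Rightarrow> real"
  assumes kc: "continuous_on UNIV (\<lambda>(x, y). k x y)" and sM: "sets M = sets borel"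
  shows "(\<lambda>v. k a (b + v)) \<in> borel_measurable M"
proof -
  have "continuous_on UNIV (\<lambda>v. (\<lambda>(x, y). k x y) ((\<lambda>v. (a, b + v)) v))"
    by (rule continuous_on_compose2[OF kc]) (auto intro!: continuous_intros)
  then show ?thesis by (intro cont_meas[OF _ sM]) simp
qed

lemma k_meas2:
  fixes k :: "'a::euclidean_space \<Rightarrow> 'a \<Rightarrow> real"
  assumes kc: "continuous_on UNIV (\<lambda>(x, y). k x y)" and s1: "sets M1 = sets borel" and s2: "sets M2 = sets borel"
  shows "(\<lambda>(u,v). k (a + u) (b + v)) \<in> borel_measurable (M1 \<Otimes>\<^sub>M M2)"
proof -
  have "(\<lambda>p. k (a + fst p) (b + snd p)) \<in> borel_measurable (M1 \<Otimes>\<^sub>M M2)"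
    by (rule cont_meas_pair[OF cont_k_shift[OF kc] s1 s2])
  then show ?thesis by (simp add: case_prod_beta')
qed

lemma kme_eq:
  fixes k :: "'a::euclidean_space \<Rightarrow> 'a \<Rightarrow> real"
  assumes P: "prob_space P" and sP: "sets P = sets borel" and kc: "continuous_on UNIV (\<lambda>(x, y). k x y)"
  shows "kme k (distr P borel (\<lambda>e. a + e)) (distr P borel (\<lambda>e. b + e)) = (\<integral>e. (\<integral>e'. k (a + e) (b + e') \<partial>P) \<partial>P)"
proof -
  interpret prob_space P by (rule P)
  have ma: "(\<lambda>e. a + e) \<in> measurable P borel" for a :: 'a
    by (rule cont_meas[OF _ sP]) (auto intro!: continuous_intros)
  have ku: "k u \<in> borel_measurable borel" for u
    using k_meas1[OF kc, of borel u 0] by simp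
  have inner: "(\<integral>v. k u v \<partial>distr P borel (\<lambda>e. b + e)) = (\<integral>e'. k u (b + e') \<partial>P)" for u
    by (rule integral_distr[OF ma ku])
  have outm: "(\<lambda>u. \<integral>e'. k u (b + e') \<partial>P) \<in> borel_measurable borel"
    using borel_measurable_lebesgue_integral[of "\<lambda>u e'. k u (b + e')" borel] k_meas2[OF kc refl sP, of 0 b] by simp
  show ?thesis unfolding kme_def inner by (rule integral_distr[OF ma outm])
qed

lemma kme_sym:
  fixes k :: "'a::euclidean_space \<Rightarrow> 'a \<Rightarrow> real"
  assumes P: "prob_space P" and sP: "sets P = sets borel" and kc: "continuous_on UNIV (\<lambda>(x, y). k x y)"
    and kb: "\<And>x y. \<bar>k x y\<bar> \<le> B" and ks: "\<And>x y. k x y = k y x"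
  shows "(\<integral>e. (\<integral>e'. k (a + e) (b + e') \<partial>P) \<partial>P) = (\<integral>e. (\<integral>e'. k (b + e) (a + e') \<partial>P) \<partial>P)"
proof -
  interpret PP: pair_prob_space P P
    by (simp add: pair_prob_space_def pair_sigma_finite_def P prob_space_imp_sigma_finite)
  have ps: "prob_space (P \<Otimes>\<^sub>M P)" by (simp add: PP.prob_space_axioms)
  have int: "integrable (P \<Otimes>\<^sub>M P) (\<lambda>(x, y). k (a + x) (b + y))"
    by (rule finite_measure.integrable_const_bound[OF prob_space.finite_measure[OF ps], where B=B])
       (use kb k_meas2[OF kc sP sP] in auto)
  have "(\<integral>y. (\<integral>x. k (a + x) (b + y) \<partial>P) \<partial>P) = (\<integral>x. (\<integral>y. k (a + x) (b + y) \<partial>P) \<partial>P)"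
    by (rule PP.Fubini_integral[OF int])
  then show ?thesis using ks by simp
qed

lemma double_integral_le:
  fixes P :: "'a measure" and H :: "'a \<Rightarrow> 'a \<Rightarrow> real"
  assumes P: "prob_space P"
    and Hm: "(\<lambda>(u,v). H u v) \<in> borel_measurable (P \<Otimes>\<^sub>M P)"
    and Hm1: "\<And>u. H u \<in> borel_measurable P"
    and Hb: "\<And>u v. \<bar>H u v\<bar> \<le> C"
    and Hq: "\<And>u v. H u v \<le> q"
  shows "(\<integral>u. (\<integral>v. H u v \<partial>P) \<partial>P) \<le> q"
proof -
  interpret prob_space P by (rule P)
  define g where "g u = (\<integral>v. H u v \<partial>P)" for u
  have gm: "g \<in> borel_measurable P"
    unfolding g_def using borel_measurable_lebesgue_integral[of "\<lambda>u v. H u v" P] Hm by simp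
  have intH: "integrable P (H u)" for u
    by (rule integrable_const_bound[where B=C]) (use Hb Hm1 in auto)
  have gq: "g u \<le> q" for u unfolding g_def by (rule integral_le_const[OF intH]) (use Hq in auto)
  have gb: "\<bar>g u\<bar> \<le> C" for u
  proof -
    have "g u \<le> C" unfolding g_def by (rule integral_le_const[OF intH]) (use Hb in \<open>auto simp: abs_le_iff\<close>)
    moreover have "- C \<le> g u" unfolding g_def
    proof (rule integral_ge_const[OF intH])
      show "AE x in P. - C \<le> H u x" by (intro AE_I2) (smt (verit) Hb)
    qed
    ultimately show ?thesis by auto
  qed
  have intg: "integrable P g"
    by (rule integrable_const_bound[where B=C]) (use gb gm in auto)
  show ?thesis using integral_le_const[OF intg] gq unfolding g_def by auto
qed

lemma Hk_cont:
  fixes k :: "'a::euclidean_space \<Rightarrow> 'a \<Rightarrow> real"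
  assumes kc: "continuous_on UNIV (\<lambda>(x, y). k x y)"
  shows "continuous_on UNIV (\<lambda>p. Hk k n x c (fst p) (snd p))"
  unfolding Hk_def by (intro continuous_intros cont_k_shift[OF kc])

lemma Hk_meas2:
  fixes k :: "'a::euclidean_space \<Rightarrow> 'a \<Rightarrow> real"
  assumes kc: "continuous_on UNIV (\<lambda>(x, y). k x y)" and sP: "sets P = sets borel"
  shows "(\<lambda>(u,v). Hk k n x c u v) \<in> borel_measurable (P \<Otimes>\<^sub>M P)"
  using cont_meas_pair[OF Hk_cont[OF kc] sP sP] by (simp add: case_prod_beta')

lemma Hk_meas1:
  fixes k :: "'a::euclidean_space \<Rightarrow> 'a \<Rightarrow> real"
  assumes kc: "continuous_on UNIV (\<lambda>(x, y). k x y)" and sP: "sets P = sets borel"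
  shows "Hk k n x c u \<in> borel_measurable P"
proof -
  have "(\<lambda>v. Hk k n x c u v) \<in> borel_measurable P"
    unfolding Hk_def by (intro borel_measurable_sum borel_measurable_times borel_measurable_const k_meas1[OF kc sP])
  then show ?thesis by simp
qed

lemma Hk_bound:
  assumes kb: "\<And>x y. \<bar>k x y\<bar> \<le> B"
  shows "\<bar>Hk k n x c u v\<bar> \<le> (\<Sum>i<n. \<Sum>j<n. \<bar>c i\<bar> * \<bar>c j\<bar> * B)"
proof -
  have "\<bar>Hk k n x c u v\<bar> \<le> (\<Sum>i<n. \<bar>\<Sum>j<n. c i * c j * k (x i + u) (x j + v)\<bar>)"
    unfolding Hk_def by (rule sum_abs)
  also have "\<dots> \<le> (\<Sum>i<n. \<Sum>j<n. \<bar>c i * c j * k (x i + u) (x j + v)\<bar>)"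
    by (intro sum_mono sum_abs)
  also have "\<dots> \<le> (\<Sum>i<n. \<Sum>j<n. \<bar>c i\<bar> * \<bar>c j\<bar> * B)"
    by (intro sum_mono) (simp add: abs_mult kb mult_left_mono)
  finally show ?thesis .
qed

lemma kme_sum:
  fixes k :: "'a::euclidean_space \<Rightarrow> 'a \<Rightarrow> real"
  assumes P: "prob_space P" and sP: "sets P = sets borel" and kc: "continuous_on UNIV (\<lambda>(x, y). k x y)"
    and kb: "\<And>x y. \<bar>k x y\<bar> \<le> B"
  shows "(\<Sum>i<n. \<Sum>j<n. c i * c j * kme k (distr P borel (\<lambda>e. x i + e)) (distr P borel (\<lambda>e. x j + e)))
    = (\<integral>u. (\<integral>v. Hk k n x c u v \<partial>P) \<partial>P)"
proof -
  interpret prob_space P by (rule P)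
  define f where "f i j u = (\<integral>v. k (x i + u) (x j + v) \<partial>P)" for i j u
  have intk: "integrable P (\<lambda>v. k (x i + u) (x j + v))" for i j u
    by (rule integrable_const_bound[where B=B]) (use kb k_meas1[OF kc sP] in auto)
  have fm: "f i j \<in> borel_measurable P" for i j
    unfolding f_def using borel_measurable_lebesgue_integral[of "\<lambda>u v. k (x i + u) (x j + v)" P] k_meas2[OF kc sP sP] by simp
  have fb: "\<bar>f i j u\<bar> \<le> B" for i j u
  proof -
    have "f i j u \<le> B" unfolding f_def by (rule integral_le_const[OF intk]) (use kb in \<open>auto simp: abs_le_iff\<close>)
    moreover have "- B \<le> f i j u" unfolding f_def
    proof (rule integral_ge_const[OF intk])
      show "AE v in P. - B \<le> k (x i + u) (x j + v)" by (intro AE_I2) (smt (verit) kb)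
    qed
    ultimately show ?thesis by auto
  qed
  have intf: "integrable P (f i j)" for i j
    by (rule integrable_const_bound[where B=B]) (use fb fm in auto)
  have inner: "(\<integral>v. Hk k n x c u v \<partial>P) = (\<Sum>i<n. \<Sum>j<n. c i * c j * f i j u)" for u
    unfolding Hk_def f_def using intk by simp
  have "(\<integral>u. (\<integral>v. Hk k n x c u v \<partial>P) \<partial>P) = (\<Sum>i<n. \<Sum>j<n. c i * c j * (\<integral>u. f i j u \<partial>P))"
    unfolding inner using intf by simp
  also have "\<dots> = (\<Sum>i<n. \<Sum>j<n. c i * c j * kme k (distr P borel (\<lambda>e. x i + e)) (distr P borel (\<lambda>e. x j + e)))"
    unfolding f_def kme_eq[OF P sP kc] ..
  finally show ?thesis ..
qed


lemma set_det_cong: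
  assumes "\<And>i j. i \<in> X \<Longrightarrow> j \<in> X \<Longrightarrow> M i j = N i j"
  shows "set_det X M = set_det X N"
  unfolding set_det_def
proof (intro sum.cong refl arg_cong2[where f="(*)"] prod.cong)
  fix p i assume "p \<in> {p. p permutes X}" "i \<in> X"
  then show "M i (p i) = N i (p i)" using assms permutes_in_image by fastforce
qed

lemma qf_mat:
  "qf n (mat n n (\<lambda>(i,j). (if i = j then 1 else 0) + K i j / lam)) c
     = (\<Sum>i<n. c i * c i) + (\<Sum>i<n. \<Sum>j<n. c i * c j * K i j) / lam"
proof -
  have "qf n (mat n n (\<lambda>(i,j). (if i = j then 1 else 0) + K i j / lam)) c
      = (\<Sum>i<n. \<Sum>j<n. (if i = j then c i * c j else 0) + c i * c j * K i j / lam)"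
    unfolding qf_def by (intro sum.cong refl) (auto simp: algebra_simps)
  also have "\<dots> = (\<Sum>i<n. c i * c i) + (\<Sum>i<n. \<Sum>j<n. c i * c j * K i j) / lam"
    by (simp add: sum.distrib sum_divide_distrib)
  finally show ?thesis .
qed

theorem proposition3:
  fixes S :: "(real ^ 'd) set"
    and Peps :: "(real ^ 'd) measure"
    and k :: "real ^ 'd \<Rightarrow> real ^ 'd \<Rightarrow> real"
    and lam :: real
  assumes "compact S"
    and "prob_space Peps" and "sets Peps = sets borel"
    and "integrable Peps (\<lambda>e. e)" and "(\<integral>e. e \<partial>Peps) = 0"
    and "continuous_on UNIV (\<lambda>(x, y). k x y)"
    and "\<exists>B. \<forall>x y. \<bar>k x y\<bar> \<le> B"
    and "translation_invariant k"
    and "pd_kernel k"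
    and "\<forall>x. k x x \<le> 1"
    and "lam > 0"
  shows "\<forall>n\<ge>1. max_info_gain (kme k) lam (noisy_laws S Peps) n \<le> max_info_gain k lam S n"
proof (intro allI impI)
  fix n :: nat assume "n \<ge> 1"
  note P = assms(2) and sP = assms(3) and kc = assms(6) and ti = assms(8) and pd = assms(9) and lam = assms(11)
  from assms(7) obtain B where kb: "\<And>x y. \<bar>k x y\<bar> \<le> B" by blast
  have ks: "\<And>x y. k x y = k y x" using pd unfolding pd_kernel_def by blast
  define Px where "Px a = distr Peps borel (\<lambda>e. a + e)" for a
  show "max_info_gain (kme k) lam (noisy_laws S Peps) n \<le> max_info_gain k lam S n"
    unfolding max_info_gain_def
  proof (rule SUP_least)
    fix R assume "R \<in> {A. A \<subseteq> noisy_laws S Peps \<and> finite A \<and> card A = n}"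
    then have RN: "R \<subseteq> noisy_laws S Peps" and Rf: "finite R" and Rc: "card R = n" by auto
    have "\<forall>Q\<in>R. \<exists>xh. xh \<in> S \<and> Q = Px xh" using RN unfolding noisy_laws_def Px_def by blast
    then obtain g where g: "\<And>Q. Q \<in> R \<Longrightarrow> g Q \<in> S \<and> Q = Px (g Q)" by metis
    have injg: "inj_on g R" by (rule inj_onI) (metis g)
    define A where "A = g ` R"
    have bg: "bij_betw g R A" unfolding A_def using injg by (simp add: bij_betw_imageI)
    have AS: "A \<subseteq> S" using g unfolding A_def by auto
    have Af: "finite A" "card A = n" using Rf Rc injg card_image unfolding A_def by auto
    obtain f where f: "bij_betw f {0..<n} R" using ex_bij_betw_nat_finite[OF Rf] Rc by blast
    define x where "x i = g (f i)" for i
    have fR: "f i \<in> R" if "i < n" for i using bij_betw_apply[OF f] that by auto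
    have fx: "f i = Px (x i)" if "i < n" for i using g fR[OF that] unfolding x_def by auto
    have finj: "f i = f j \<longleftrightarrow> i = j" if "i < n" "j < n" for i j
      using f that unfolding bij_betw_def inj_on_def by auto
    have bgf: "bij_betw (g \<circ> f) {0..<n} A" using bij_betw_trans[OF f bg] .
    have xinj: "x i = x j \<longleftrightarrow> i = j" if "i < n" "j < n" for i j
      using bgf that unfolding bij_betw_def inj_on_def x_def by auto
    define X where "X = mat n n (\<lambda>(i,j). (if i = j then 1 else 0) + kme k (Px (x i)) (Px (x j)) / lam)"
    define Y where "Y = mat n n (\<lambda>(i,j). (if i = j then 1 else 0) + k (x i) (x j) / lam)"
    have dX: "set_det R (\<lambda>a b. (if a = b then 1 else 0) + kme k a b / lam) = det X"
      unfolding X_def det_mat_set_det set_det_reindex[OF f finite_atLeastLessThan]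
    proof (rule set_det_cong)
      fix i j assume "i \<in> {0..<n}" "j \<in> {0..<n}"
      then have ij: "i < n" "j < n" by auto
      have "f i = f j \<longleftrightarrow> i = j" by (rule finj[OF ij])
      then show "(if f i = f j then 1 else 0) + kme k (f i) (f j) / lam =
        (case (i, j) of (i, j) \<Rightarrow> (if i = j then 1 else 0) + kme k (Px (x i)) (Px (x j)) / lam)"
        using fx[OF ij(1)] fx[OF ij(2)] by simp
    qed
    have dY: "set_det A (\<lambda>a b. (if a = b then 1 else 0) + k a b / lam) = det Y"
      unfolding Y_def det_mat_set_det set_det_reindex[OF bgf finite_atLeastLessThan]
      by (rule set_det_cong) (use xinj in \<open>simp add: x_def\<close>)
    have Xc: "X \<in> carrier_mat n n" and Yc: "Y \<in> carrier_mat n n" unfolding X_def Y_def by auto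
    have kS: "(\<Sum>i<n. \<Sum>j<n. c i * c j * kme k (Px (x i)) (Px (x j))) = (\<integral>u. (\<integral>v. Hk k n x c u v \<partial>Peps) \<partial>Peps)" for c
      unfolding Px_def by (rule kme_sum[OF P sP kc kb])
    have Hnn: "0 \<le> (\<integral>u. (\<integral>v. Hk k n x c u v \<partial>Peps) \<partial>Peps)" for c
    proof (rule double_integral_nonneg[OF P Hk_meas2[OF kc sP] Hk_meas1[OF kc sP] Hk_bound[OF kb]])
      show "Hk k n x c u v = Hk k n x c v u" for u v by (rule Hk_sym[OF ks])
      show "Hk k n x c u u = Hk k n x c 0 0" for u by (rule Hk_diag[OF ti])
      show "0 \<le> (\<Sum>a<r. \<Sum>b<r. Hk k n x c (y a) (y b))" for r :: nat and y :: "nat \<Rightarrow> real ^ 'd"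
        using Hk_pd[OF pd, where d="\<lambda>_. 1" and r=r and y=y] by simp
    qed
    have Hle: "(\<integral>u. (\<integral>v. Hk k n x c u v \<partial>Peps) \<partial>Peps) \<le> (\<Sum>i<n. \<Sum>j<n. c i * c j * k (x i) (x j))" for c
    proof -
      have "(\<integral>u. (\<integral>v. Hk k n x c u v \<partial>Peps) \<partial>Peps) \<le> Hk k n x c 0 0"
        by (rule double_integral_le[OF P Hk_meas2[OF kc sP] Hk_meas1[OF kc sP] Hk_bound[OF kb] Hk_le[OF pd ti]])
      then show ?thesis by (simp add: Hk_def)
    qed
    have mono: "0 < det X \<and> det X \<le> det Y"
    proof (rule det_mono[OF Xc Yc])
      fix i j assume ij: "i < n" "j < n"
      have "kme k (Px (x i)) (Px (x j)) = kme k (Px (x j)) (Px (x i))"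
        unfolding Px_def kme_eq[OF P sP kc] by (rule kme_sym[OF P sP kc kb ks])
      then show "X $$ (i,j) = X $$ (j,i)" unfolding X_def using ij by auto
      show "Y $$ (i,j) = Y $$ (j,i)" unfolding Y_def using ij ks by auto
    next
      fix c :: "nat \<Rightarrow> real" assume "\<exists>i<n. c i \<noteq> 0"
      then obtain i0 where i0: "i0 < n" "c i0 \<noteq> 0" by blast
      have "0 < (\<Sum>i<n. c i * c i)"
      proof -
        have "0 < c i0 * c i0" using i0 by (auto simp: zero_less_mult_iff linorder_neq_iff)
        also have "\<dots> \<le> (\<Sum>i<n. c i * c i)"
          by (rule member_le_sum) (use i0 in auto)
        finally show ?thesis .
      qed
      moreover have "0 \<le> (\<Sum>i<n. \<Sum>j<n. c i * c j * kme k (Px (x i)) (Px (x j))) / lam"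
        using kS Hnn lam by simp
      ultimately show "0 < qf n X c" unfolding X_def qf_mat by linarith
    next
      fix c :: "nat \<Rightarrow> real"
      have "(\<Sum>i<n. \<Sum>j<n. c i * c j * kme k (Px (x i)) (Px (x j))) \<le> (\<Sum>i<n. \<Sum>j<n. c i * c j * k (x i) (x j))"
        using kS Hle by simp
      then have "(\<Sum>i<n. \<Sum>j<n. c i * c j * kme k (Px (x i)) (Px (x j))) / lam \<le> (\<Sum>i<n. \<Sum>j<n. c i * c j * k (x i) (x j)) / lam"
        using lam by (simp add: divide_right_mono)
      then show "qf n X c \<le> qf n Y c" unfolding X_def Y_def qf_mat by linarith
    qed
    have "info_gain (kme k) lam R \<le> info_gain k lam A"
      unfolding info_gain_def dX dY using mono by simp
    moreover have "A \<in> {A. A \<subseteq> S \<and> finite A \<and> card A = n}" using AS Af by auto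
    ultimately show "ereal (info_gain (kme k) lam R) \<le> (SUP A\<in>{A. A \<subseteq> S \<and> finite A \<and> card A = n}. ereal (info_gain k lam A))"
      by (intro SUP_upper2[of A]) auto
  qed
qed

end
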